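(* Let $G$ be a countable abelian group, let $B$ be a Bohr neighborhood of $0$ in $G$, and let $c\in\mathbb Z$ be such that $cG$ has finite index in $G$. Then $cB=\{cb:b\in B\}$ contains a Bohr neighborhood of $0$ in $G$.
   Context: $G$ is discrete. A Bohr neighborhood of $0$ in $G$ is a set $\{g\in G:|\chi_i(g)-1|<\varepsilon,\ 1\le i\le r\}$ for some $r\in\mathbb N$, homomorphisms $\chi_1,\dots,\chi_r:G\to\{z\in\mathbb C:|z|=1\}$ and $\varepsilon>0$. $cG=\{cg:g\in G\}$. *)

theory Defs
  imports Complex_Main "HOL-Library.Countable"
begin

text \<open>The group G is the (discrete) type 'a, an abelian group written additively.\<close>

definition zmult :: "int \<Rightarrow> 'a::ab_group_add \<Rightarrow> 'a" where
  "zmult c g = (if 0 \<le> c then (\<Sum>_<nat c. g) else - (\<Sum>_<nat (- c). g))"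

definition character :: "('a::ab_group_add \<Rightarrow> complex) \<Rightarrow> bool" where
  "character \<chi> \<longleftrightarrow> (\<forall>x y. \<chi> (x + y) = \<chi> x * \<chi> y) \<and> (\<forall>x. norm (\<chi> x) = 1)"

definition bohr_nbhd :: "'a::ab_group_add set \<Rightarrow> bool" where
  "bohr_nbhd B \<longleftrightarrow> (\<exists>(r::nat) (\<chi>s :: nat \<Rightarrow> 'a \<Rightarrow> complex) (\<epsilon>::real).
      \<epsilon> > 0 \<and> (\<forall>i<r. character (\<chi>s i)) \<and>
      B = {g. \<forall>i<r. norm (\<chi>s i g - 1) < \<epsilon>})"

definition finite_index :: "'a::ab_group_add set \<Rightarrow> bool" where
  "finite_index H \<longleftrightarrow> finite ((\<lambda>g. (\<lambda>h. g + h) ` H) ` UNIV)"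

end

theory Submission
  imports Defs
begin


definition nsum :: "nat \<Rightarrow> 'a::ab_group_add \<Rightarrow> 'a" where
  "nsum n g = (\<Sum>_<n. g)"

lemma nsum_add: "nsum (m + n) g = nsum m g + nsum n g"
  by (induction n) (auto simp: nsum_def add.assoc)

lemma nsum_distrib: "nsum n (x + y) = nsum n x + nsum n y"
  by (simp add: nsum_def sum.distrib)

lemma nsum_neg: "nsum n (- x) = - nsum n x"
  by (simp add: nsum_def sum_negf)

lemma zmult_nsum: "zmult c g = nsum (nat c) g - nsum (nat (-c)) g"
  by (simp add: zmult_def nsum_def)

lemma zmult_add_left: "zmult (a + b) g = zmult a g + zmult b g"
proof -
  have e: "nat (a+b) + nat (-a) + nat (-b) = nat (-(a+b)) + nat a + nat b" by linarith
  have "nsum (nat (a+b)) g + nsum (nat (-a)) g + nsum (nat (-b)) g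
      = nsum (nat (-(a+b))) g + nsum (nat a) g + nsum (nat b) g"
    by (metis e nsum_add)
  then show ?thesis unfolding zmult_nsum by (simp add: algebra_simps)
qed

lemma zmult_add_right: "zmult c (x + y) = zmult c x + zmult c y"
  by (simp add: zmult_nsum nsum_distrib)

lemma zmult_neg_right: "zmult c (- x) = - zmult c x"
  by (simp add: zmult_nsum nsum_neg)

lemma zmult_diff_right: "zmult c (x - y) = zmult c x - zmult c y"
  by (metis diff_conv_add_uminus zmult_add_right zmult_neg_right)

lemma zmult_zero_right[simp]: "zmult c 0 = 0"
  by (metis add.right_neutral add_cancel_right_right zmult_add_right)

lemma zmult_zero_left[simp]: "zmult 0 x = 0"
  by (simp add: zmult_def)

lemma zmult_one[simp]: "zmult 1 x = x"
  by (simp add: zmult_def)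

lemma zmult_neg_left: "zmult (- a) x = - zmult a x"
  by (metis add.right_inverse add_eq_0_iff zmult_add_left zmult_zero_left)

lemma zmult_diff_left: "zmult (a - b) x = zmult a x - zmult b x"
  by (metis diff_conv_add_uminus uminus_add_conv_diff zmult_add_left zmult_neg_left)

lemma zmult_mult: "zmult (a * b) x = zmult a (zmult b x)"
proof (induction a rule: int_induct[where k=0])
  case base then show ?case by simp
next
  case (step1 i)
  have "zmult ((i+1) * b) x = zmult (i*b) x + zmult b x" by (simp add: distrib_right zmult_add_left)
  also have "\<dots> = zmult (i+1) (zmult b x)" using step1 by (simp add: zmult_add_left)
  finally show ?case .
next
  case (step2 i)
  have "zmult ((i-1) * b) x = zmult (i*b) x - zmult b x" by (simp add: left_diff_distrib zmult_diff_left)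
  also have "\<dots> = zmult (i-1) (zmult b x)" using step2 by (simp add: zmult_diff_left)
  finally show ?case .
qed

lemma character_zero: "character \<chi> \<Longrightarrow> \<chi> 0 = 1"
  unfolding character_def
  by (metis add.right_neutral mult_cancel_left1 norm_zero zero_neq_one)

lemma character_nz: "character \<chi> \<Longrightarrow> \<chi> x \<noteq> 0"
  unfolding character_def by (metis norm_zero zero_neq_one)

lemma unit_inverse_cnj: assumes "norm (z::complex) = 1" shows "inverse z = cnj z"
proof -
  have "z * cnj z = 1" using complex_norm_square[of z] assms by simp
  then show ?thesis by (simp add: inverse_unique)
qed

lemma character_neg: "character \<chi> \<Longrightarrow> \<chi> (- x) = cnj (\<chi> x)"
proof -
  assume c: "character \<chi>"
  have "\<chi> x * \<chi> (- x) = 1" using c character_zero[OF c] unfolding character_def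
    by (metis add.right_inverse)
  then have "\<chi> (-x) = inverse (\<chi> x)" by (metis inverse_unique mult.commute)
  then show ?thesis using c unfolding character_def by (simp add: unit_inverse_cnj)
qed

lemma character_add: "character \<chi> \<Longrightarrow> \<chi> (x + y) = \<chi> x * \<chi> y"
  unfolding character_def by auto

lemma character_norm: "character \<chi> \<Longrightarrow> norm (\<chi> x) = 1"
  unfolding character_def by auto

lemma character_diff: "character \<chi> \<Longrightarrow> \<chi> (x - y) = \<chi> x * cnj (\<chi> y)"
  by (metis character_add character_neg diff_conv_add_uminus)

lemma character_zmult: assumes ch: "character \<chi>" shows "\<chi> (zmult c x) = \<chi> x powi c"
proof (induction c rule: int_induct[where k=0])
  case base then show ?case by (simp add: character_zero[OF ch])
next
  case (step1 i)
  then show ?case using character_nz[OF ch, of x]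
    by (simp add: zmult_add_left character_add[OF ch] power_int_add)
next
  case (step2 i)
  then show ?case using character_nz[OF ch, of x]
    by (simp add: zmult_diff_left character_diff[OF ch] power_int_diff unit_inverse_cnj[symmetric] character_norm[OF ch]
          divide_inverse)
qed



definition subgrp :: "'a::ab_group_add set \<Rightarrow> bool" where
  "subgrp H \<longleftrightarrow> 0 \<in> H \<and> (\<forall>x\<in>H. \<forall>y\<in>H. x + y \<in> H) \<and> (\<forall>x\<in>H. - x \<in> H)"

definition pchar :: "'a::ab_group_add set \<Rightarrow> ('a \<Rightarrow> complex) \<Rightarrow> bool" where
  "pchar H \<phi> \<longleftrightarrow> subgrp H \<and> (\<forall>x\<in>H. \<forall>y\<in>H. \<phi> (x + y) = \<phi> x * \<phi> y) \<and> (\<forall>x\<in>H. norm (\<phi> x) = 1)"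

lemma subgrp_diff: "subgrp H \<Longrightarrow> x \<in> H \<Longrightarrow> y \<in> H \<Longrightarrow> x - y \<in> H"
  unfolding subgrp_def by (metis diff_conv_add_uminus)

lemma subgrp_zmult: assumes "subgrp H" "x \<in> H" shows "zmult m x \<in> H"
proof (induction m rule: int_induct[where k=0])
  case base then show ?case using assms by (simp add: subgrp_def)
next
  case (step1 i) then show ?case using assms by (simp add: zmult_add_left subgrp_def)
next
  case (step2 i) then show ?case using assms by (simp add: zmult_diff_left subgrp_diff)
qed

lemma pchar_zero: assumes "pchar H \<phi>" shows "\<phi> 0 = 1"
proof -
  have "0 \<in> H" "\<phi> (0+0) = \<phi> 0 * \<phi> 0" "norm (\<phi> 0) = 1" using assms unfolding pchar_def subgrp_def by auto
  then show ?thesis by (metis add_0 mult_cancel_right1 norm_zero zero_neq_one)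
qed

lemma pchar_neg: assumes "pchar H \<phi>" "x \<in> H" shows "\<phi> (- x) = cnj (\<phi> x)"
proof -
  have "\<phi> x * \<phi> (- x) = 1" using assms pchar_zero[OF assms(1)] unfolding pchar_def subgrp_def
    by (metis add.right_inverse)
  then have "\<phi> (-x) = inverse (\<phi> x)" by (metis inverse_unique)
  then show ?thesis using assms unfolding pchar_def by (simp add: unit_inverse_cnj)
qed

lemma pchar_diff: assumes "pchar H \<phi>" "x \<in> H" "y \<in> H" shows "\<phi> (x - y) = \<phi> x * cnj (\<phi> y)"
  using assms pchar_neg[OF assms(1) assms(3)] unfolding pchar_def subgrp_def
  by (metis diff_conv_add_uminus)

lemma pchar_nz: "pchar H \<phi> \<Longrightarrow> x \<in> H \<Longrightarrow> \<phi> x \<noteq> 0"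
  unfolding pchar_def by (metis norm_zero zero_neq_one)

lemma pchar_zmult: assumes ch: "pchar H \<phi>" and x: "x \<in> H" shows "\<phi> (zmult c x) = \<phi> x powi c"
proof (induction c rule: int_induct[where k=0])
  case base then show ?case by (simp add: pchar_zero[OF ch])
next
  case (step1 i)
  have "\<phi> (zmult (i+1) x) = \<phi> (zmult i x) * \<phi> x"
    using ch x subgrp_zmult[of H x i] unfolding pchar_def by (simp add: zmult_add_left)
  then show ?case using step1 pchar_nz[OF ch x] by (simp add: power_int_add)
next
  case (step2 i)
  have "\<phi> (zmult (i-1) x) = \<phi> (zmult i x) * cnj (\<phi> x)"
    using ch x subgrp_zmult[of H x i] pchar_diff[OF ch] unfolding pchar_def by (simp add: zmult_diff_left)
  then show ?case using step2 pchar_nz[OF ch x] x ch unfolding pchar_def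
    by (simp add: power_int_diff unit_inverse_cnj[symmetric] divide_inverse)
qed

lemma one_step:
  assumes ch: "pchar H \<phi>" and z: "norm z = 1"
    and zc: "\<forall>m. zmult m g \<in> H \<longrightarrow> z powi m = \<phi> (zmult m g)"
  shows "\<exists>\<psi>. pchar {h + zmult k g |h k. h \<in> H} \<psi> \<and> (\<forall>x\<in>H. \<psi> x = \<phi> x) \<and> \<psi> g = z"
proof -
  let ?H = "{h + zmult k g |h k. h \<in> H}"
  have sg: "subgrp H" using ch by (simp add: pchar_def)
  have z0: "z \<noteq> 0" using z by auto
  have key: "\<phi> h * z powi k = \<phi> h' * z powi k'"
    if "h \<in> H" "h' \<in> H" "h + zmult k g = h' + zmult k' g" for h h' k k'
  proof -
    have "zmult (k - k') g = h' - h" using that(3) by (simp add: zmult_diff_left algebra_simps)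
    then have e: "z powi (k - k') = \<phi> h' * cnj (\<phi> h)"
      using zc subgrp_diff[OF sg that(2,1)] pchar_diff[OF ch that(2,1)] by metis
    have n: "\<phi> h * cnj (\<phi> h) = 1" using ch that(1) unfolding pchar_def
      by (metis complex_norm_square mult.commute of_real_1 one_power2)
    have "\<phi> h * z powi k = \<phi> h * z powi (k - k') * z powi k'"
      using z0 by (simp add: power_int_diff)
    also have "\<dots> = \<phi> h' * (\<phi> h * cnj (\<phi> h)) * z powi k'" using e by (simp add: algebra_simps)
    finally show ?thesis using n by simp
  qed
  define \<psi> where "\<psi> x = (SOME a. \<exists>h k. h \<in> H \<and> x = h + zmult k g \<and> a = \<phi> h * z powi k)" for x
  have psi: "\<psi> (h + zmult k g) = \<phi> h * z powi k" if "h \<in> H" for h k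
  proof -
    have "\<exists>h' k'. h' \<in> H \<and> h + zmult k g = h' + zmult k' g \<and> \<psi> (h + zmult k g) = \<phi> h' * z powi k'"
      unfolding \<psi>_def by (rule someI_ex) (use that in blast)
    then show ?thesis using key that by metis
  qed
  have "pchar ?H \<psi>"
    unfolding pchar_def subgrp_def
  proof (intro conjI ballI)
    show "0 \<in> ?H" using sg unfolding subgrp_def by (metis (mono_tags, lifting) add_0 mem_Collect_eq zmult_zero_left)
  next
    fix x y assume "x \<in> ?H" "y \<in> ?H"
    then obtain h1 k1 h2 k2 where h: "h1 \<in> H" "h2 \<in> H" "x = h1 + zmult k1 g" "y = h2 + zmult k2 g" by blast
    have xy: "x + y = (h1 + h2) + zmult (k1 + k2) g" using h by (simp add: zmult_add_left algebra_simps)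
    have h12: "h1 + h2 \<in> H" using sg h unfolding subgrp_def by blast
    show "x + y \<in> ?H" using xy h12 by blast
    have "\<psi> (x + y) = \<phi> (h1 + h2) * z powi (k1 + k2)" using xy psi h12 by simp
    also have "\<dots> = (\<phi> h1 * z powi k1) * (\<phi> h2 * z powi k2)"
      using ch h(1,2) z0 unfolding pchar_def by (simp add: power_int_add)
    finally show "\<psi> (x + y) = \<psi> x * \<psi> y" using psi h by simp
  next
    fix x assume "x \<in> ?H"
    then obtain h k where h: "h \<in> H" "x = h + zmult k g" by blast
    have "- x = (- h) + zmult (- k) g" using h by (simp add: zmult_neg_left)
    moreover have "- h \<in> H" using sg h unfolding subgrp_def by blast
    ultimately show "- x \<in> ?H" by blast
    show "norm (\<psi> x) = 1" using h psi ch z unfolding pchar_def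
      by (simp add: norm_mult norm_power_int)
  qed
  moreover have "\<forall>x\<in>H. \<psi> x = \<phi> x" using psi[of _ 0] by (simp add: pchar_zero)
  moreover have "\<psi> g = z" using psi[of 0 1] sg pchar_zero[OF ch] unfolding subgrp_def by simp
  ultimately show ?thesis by blast
qed

lemma exists_z:
  assumes ch: "pchar H \<phi>"
  shows "\<exists>z. norm z = 1 \<and> (\<forall>m. zmult m g \<in> H \<longrightarrow> z powi m = \<phi> (zmult m g))"
proof (cases "\<exists>N::nat. N > 0 \<and> zmult (int N) g \<in> H")
  case False
  have "\<forall>m. zmult m g \<in> H \<longrightarrow> m = 0"
  proof (intro allI impI)
    fix m assume m: "zmult m g \<in> H"
    have sg: "subgrp H" using ch by (simp add: pchar_def)
    have "zmult (- m) g \<in> H" using m sg unfolding subgrp_def by (simp add: zmult_neg_left)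
    then show "m = 0" using False m
      by (metis nat_0_le nat_eq_iff2 neg_0_less_iff_less zero_less_nat_eq linorder_neq_iff neg_0_le_iff_le)
  qed
  then show ?thesis using pchar_zero[OF ch] by (intro exI[of _ 1]) auto
next
  case True
  have sg: "subgrp H" using ch by (simp add: pchar_def)
  define N where "N = (LEAST N::nat. N > 0 \<and> zmult (int N) g \<in> H)"
  have N: "N > 0" "zmult (int N) g \<in> H" unfolding N_def using LeastI_ex[OF True] by auto
  have dvd: "int N dvd m" if m: "zmult m g \<in> H" for m
  proof (rule ccontr)
    assume nd: "\<not> int N dvd m"
    have "zmult (m mod int N) g = zmult m g - zmult (int N * (m div int N)) g"
    proof -
      have "zmult m g = zmult (int N * (m div int N)) g + zmult (m mod int N) g"
        using zmult_add_left[of "int N * (m div int N)" "m mod int N" g] by simp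
      then show ?thesis by (metis add_diff_cancel_left')
    qed
    also have "zmult (int N * (m div int N)) g = zmult (m div int N) (zmult (int N) g)"
      by (metis mult.commute zmult_mult)
    finally have inH: "zmult (m mod int N) g \<in> H"
      using m N(2) sg subgrp_zmult subgrp_diff by metis
    have pos: "m mod int N > 0" using nd N(1)
      by (metis dvd_eq_mod_eq_0 of_nat_0_less_iff pos_mod_sign order_le_less)
    have lt: "nat (m mod int N) < N" using N(1) by (simp add: nat_less_iff)
    have "\<not> (nat (m mod int N) > 0 \<and> zmult (int (nat (m mod int N))) g \<in> H)"
      using not_less_Least[OF lt[unfolded N_def]] N_def by simp
    then show False using pos inH by simp
  qed
  define w where "w = \<phi> (zmult (int N) g)"
  have wn: "norm w = 1" using ch N(2) unfolding pchar_def w_def by auto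
  then have w0: "w \<noteq> 0" by auto
  define z where "z = cis (Arg w / real N)"
  have "z ^ N = cis (Arg w)" unfolding z_def DeMoivre using N(1) by simp
  also have "\<dots> = sgn w" using Arg_correct[OF w0] by simp
  also have "\<dots> = w" using wn by (simp add: sgn_eq)
  finally have zN: "z ^ N = w" .
  have zn: "norm z = 1" unfolding z_def by simp
  have "z powi m = \<phi> (zmult m g)" if m: "zmult m g \<in> H" for m
  proof -
    obtain q where q: "m = int N * q" using dvd[OF m] by (auto elim: dvdE)
    have "z powi m = (z powi int N) powi q" using q by (simp add: power_int_mult)
    also have "\<dots> = w powi q" using zN by simp
    also have "\<dots> = \<phi> (zmult q (zmult (int N) g))" using pchar_zmult[OF ch N(2)] w_def by simp
    also have "\<dots> = \<phi> (zmult m g)" using q by (simp add: zmult_mult[symmetric] mult.commute)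
    finally show ?thesis .
  qed
  then show ?thesis using zn by blast
qed



definition pgraph :: "('a::ab_group_add \<times> complex) set \<Rightarrow> bool" where
  "pgraph F \<longleftrightarrow> (\<forall>x a b. (x,a)\<in>F \<longrightarrow> (x,b)\<in>F \<longrightarrow> a = b) \<and> (0,1) \<in> F \<and>
     (\<forall>x a y b. (x,a)\<in>F \<longrightarrow> (y,b)\<in>F \<longrightarrow> (x+y, a*b)\<in>F) \<and>
     (\<forall>x a. (x,a)\<in>F \<longrightarrow> (-x, cnj a)\<in>F \<and> norm a = 1)"

definition graph :: "'a set \<Rightarrow> ('a \<Rightarrow> complex) \<Rightarrow> ('a \<times> complex) set" where
  "graph H \<phi> = (\<lambda>x. (x, \<phi> x)) ` H"

lemma pchar_pgraph: assumes "pchar H \<phi>" shows "pgraph (graph H \<phi>)"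
  using assms pchar_zero[OF assms] pchar_neg[OF assms]
  unfolding pgraph_def graph_def pchar_def subgrp_def by auto

lemma pgraph_pchar:
  assumes "pgraph F"
  shows "pchar (Domain F) (\<lambda>x. THE a. (x,a)\<in>F) \<and> F = graph (Domain F) (\<lambda>x. THE a. (x,a)\<in>F)"
proof -
  have the: "(THE a. (x,a)\<in>F) = a" if "(x,a)\<in>F" for x a
    using assms that unfolding pgraph_def by (intro the_equality) auto
  show ?thesis
    unfolding pchar_def subgrp_def graph_def
  proof (intro conjI ballI)
    show "0 \<in> Domain F" using assms unfolding pgraph_def by auto
    fix x assume "x \<in> Domain F"
    then obtain a where a: "(x,a)\<in>F" by auto
    show "- x \<in> Domain F" using assms a unfolding pgraph_def by blast
    show "cmod (THE a. (x, a) \<in> F) = 1" using assms a the unfolding pgraph_def by auto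
    fix y assume "y \<in> Domain F"
    then obtain b where b: "(y,b)\<in>F" by auto
    show "x + y \<in> Domain F" using assms a b unfolding pgraph_def by blast
    show "(THE a. (x + y, a) \<in> F) = (THE a. (x, a) \<in> F) * (THE a. (y, a) \<in> F)"
    proof -
      have "(x+y, a*b) \<in> F" using assms a b unfolding pgraph_def by blast
      then show ?thesis using the[OF a] the[OF b] the[of "x+y" "a*b"] by simp
    qed
  next
    show "F = (\<lambda>x. (x, THE a. (x, a) \<in> F)) ` Domain F"
      using the by force
  qed
qed

lemma extend_char:
  fixes \<phi> :: "'a::ab_group_add \<Rightarrow> complex"
  assumes ch: "pchar H \<phi>"
  shows "\<exists>\<psi>. character \<psi> \<and> (\<forall>x\<in>H. \<psi> x = \<phi> x)"
proof -
  define A where "A = {F. pgraph F \<and> graph H \<phi> \<subseteq> F}"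
  have "\<forall>C\<in>chains A. \<exists>U\<in>A. \<forall>X\<in>C. X \<subseteq> U"
  proof
    fix C assume C: "C \<in> chains A"
    show "\<exists>U\<in>A. \<forall>X\<in>C. X \<subseteq> U"
    proof (cases "C = {}")
      case True
      then show ?thesis using pchar_pgraph[OF ch] unfolding A_def by auto
    next
      case False
      have CA: "C \<subseteq> A" and chn: "\<forall>X\<in>C. \<forall>Y\<in>C. X \<subseteq> Y \<or> Y \<subseteq> X"
        using C unfolding chains_def chain_subset_def by auto
      have pg: "\<And>X. X \<in> C \<Longrightarrow> pgraph X" and gs: "\<And>X. X \<in> C \<Longrightarrow> graph H \<phi> \<subseteq> X"
        using CA unfolding A_def by auto
      have two: "\<exists>X\<in>C. p \<in> X \<and> q \<in> X" if "p \<in> \<Union>C" "q \<in> \<Union>C" for p q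
        using that chn by blast
      have "pgraph (\<Union>C)"
        unfolding pgraph_def
      proof (intro conjI allI impI)
        fix x a b assume "(x,a) \<in> \<Union>C" "(x,b) \<in> \<Union>C"
        then obtain X where "X \<in> C" "(x,a)\<in>X" "(x,b)\<in>X" using two by blast
        then show "a = b" using pg unfolding pgraph_def by blast
      next
        show "(0,1) \<in> \<Union>C" using False pg unfolding pgraph_def by blast
      next
        fix x a y b assume "(x,a) \<in> \<Union>C" "(y,b) \<in> \<Union>C"
        then obtain X where "X \<in> C" "(x,a)\<in>X" "(y,b)\<in>X" using two by blast
        then show "(x+y, a*b) \<in> \<Union>C" using pg unfolding pgraph_def by blast
      next
        fix x a assume "(x,a) \<in> \<Union>C"
        then obtain X where "X \<in> C" "(x,a)\<in>X" by blast
        then show "(-x, cnj a) \<in> \<Union>C" "norm a = 1" using pg unfolding pgraph_def by blast+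
      qed
      moreover have "graph H \<phi> \<subseteq> \<Union>C" using False gs by blast
      ultimately show ?thesis unfolding A_def by blast
    qed
  qed
  from Zorn_Lemma2[OF this] obtain M where M: "M \<in> A" and max: "\<forall>X\<in>A. M \<subseteq> X \<longrightarrow> X = M" by blast
  define \<phi>' where "\<phi>' = (\<lambda>x. THE a. (x,a)\<in>M)"
  have pgM: "pgraph M" and gM: "graph H \<phi> \<subseteq> M" using M unfolding A_def by auto
  have pc: "pchar (Domain M) \<phi>'" and Meq: "M = graph (Domain M) \<phi>'"
    using pgraph_pchar[OF pgM] unfolding \<phi>'_def by auto
  have full: "Domain M = UNIV"
  proof (rule ccontr)
    assume "Domain M \<noteq> UNIV"
    then obtain g where g: "g \<notin> Domain M" by auto
    obtain z where z: "norm z = 1" "\<forall>m. zmult m g \<in> Domain M \<longrightarrow> z powi m = \<phi>' (zmult m g)"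
      using exists_z[OF pc] by blast
    obtain \<psi> where \<psi>: "pchar {h + zmult k g |h k. h \<in> Domain M} \<psi>" "\<forall>x\<in>Domain M. \<psi> x = \<phi>' x"
      using one_step[OF pc z] by blast
    let ?H = "{h + zmult k g |h k. h \<in> Domain M}"
    have sub: "Domain M \<subseteq> ?H"
    proof
      fix x assume "x \<in> Domain M"
      then show "x \<in> ?H" by (intro CollectI exI[of _ x] exI[of _ 0] conjI) simp_all
    qed
    have d0: "0 \<in> Domain M" using pc unfolding pchar_def subgrp_def by simp
    have gin: "g \<in> ?H" by (intro CollectI exI[of _ 0] exI[of _ 1] conjI) (simp_all add: d0)
    have MG: "M \<subseteq> graph ?H \<psi>"
    proof
      fix p assume "p \<in> M"
      then obtain x where x: "x \<in> Domain M" "p = (x, \<phi>' x)" using Meq unfolding graph_def by blast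
      then have "p = (x, \<psi> x)" using \<psi>(2) by simp
      moreover have "x \<in> ?H" using sub x(1) by blast
      ultimately show "p \<in> graph ?H \<psi>" unfolding graph_def by blast
    qed
    have "graph ?H \<psi> \<in> A" using pchar_pgraph[OF \<psi>(1)] gM MG unfolding A_def by auto
    then have "graph ?H \<psi> = M" using max MG by blast
    then have "g \<in> Domain M" using gin unfolding graph_def by force
    then show False using g by simp
  qed
  have "character \<phi>'" using pc full unfolding pchar_def character_def by auto
  moreover have "\<forall>x\<in>H. \<phi>' x = \<phi> x"
  proof
    fix x assume "x \<in> H"
    then have "(x, \<phi> x) \<in> M" using gM unfolding graph_def by auto
    then have "(x, \<phi> x) \<in> graph (Domain M) \<phi>'" using Meq by simp
    then show "\<phi>' x = \<phi> x" unfolding graph_def by auto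
  qed
  ultimately show ?thesis by blast
qed



lemma least_dvd:
  assumes sg: "subgrp H" and ex: "\<exists>N::nat. N > 0 \<and> zmult (int N) g \<in> H"
  defines "N \<equiv> (LEAST N::nat. N > 0 \<and> zmult (int N) g \<in> H)"
  shows "N > 0" "zmult (int N) g \<in> H" "\<And>m. zmult m g \<in> H \<Longrightarrow> int N dvd m"
proof -
  show N: "N > 0" "zmult (int N) g \<in> H" unfolding N_def using LeastI_ex[OF ex] by auto
  fix m assume m: "zmult m g \<in> H"
  show "int N dvd m"
  proof (rule ccontr)
    assume nd: "\<not> int N dvd m"
    have "zmult (m mod int N) g = zmult m g - zmult (int N * (m div int N)) g"
    proof -
      have "zmult m g = zmult (int N * (m div int N)) g + zmult (m mod int N) g"
        using zmult_add_left[of "int N * (m div int N)" "m mod int N" g] by simp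
      then show ?thesis by (metis add_diff_cancel_left')
    qed
    also have "zmult (int N * (m div int N)) g = zmult (m div int N) (zmult (int N) g)"
      by (metis mult.commute zmult_mult)
    finally have inH: "zmult (m mod int N) g \<in> H"
      using m N(2) sg subgrp_zmult subgrp_diff by metis
    have pos: "m mod int N > 0" using nd N(1)
      by (metis dvd_eq_mod_eq_0 of_nat_0_less_iff pos_mod_sign order_le_less)
    have lt: "nat (m mod int N) < N" using N(1) by (simp add: nat_less_iff)
    have "\<not> (nat (m mod int N) > 0 \<and> zmult (int (nat (m mod int N))) g \<in> H)"
      using not_less_Least[OF lt[unfolded N_def]] N_def by simp
    then show False using pos inH by simp
  qed
qed

lemma sep_char:
  fixes H :: "'a::ab_group_add set"
  assumes sg: "subgrp H" and ex: "\<exists>N::nat. N > 0 \<and> zmult (int N) g \<in> H" and g: "g \<notin> H"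
  shows "\<exists>\<xi>. character \<xi> \<and> (\<forall>h\<in>H. \<xi> h = 1) \<and> \<xi> g \<noteq> 1"
proof -
  define N where "N \<equiv> (LEAST N::nat. N > 0 \<and> zmult (int N) g \<in> H)"
  note L = least_dvd[OF sg ex, folded N_def]
  have N2: "N \<ge> 2" using L(1,2) g by (metis One_nat_def Suc_1 not_less_eq_eq of_nat_1 zmult_one le_neq_implies_less less_one less_2_cases_iff not_less)
  have "card {z::complex. z ^ N = 1} = N" using L(1) by (rule card_roots_unity_eq)
  then obtain z :: complex where z: "z ^ N = 1" "z \<noteq> 1"
  proof -
    assume *: "\<And>z::complex. z ^ N = 1 \<Longrightarrow> z \<noteq> 1 \<Longrightarrow> thesis"
    show thesis
    proof (rule ccontr)
      assume "\<not> thesis"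
      have "{z::complex. z ^ N = 1} \<subseteq> {1}"
      proof
        fix x assume "x \<in> {z::complex. z ^ N = 1}"
        then show "x \<in> {1}" using * \<open>\<not> thesis\<close> by (cases "x = 1") auto
      qed
      then have "card {z::complex. z ^ N = 1} \<le> card {1::complex}" by (rule card_mono[rotated]) simp
      then have "card {z::complex. z ^ N = 1} \<le> 1" by simp
      then show False using \<open>card {z::complex. z ^ N = 1} = N\<close> N2 by simp
    qed
  qed
  have zn: "norm z = 1" using z(1) L(1)
    by (metis norm_ge_zero norm_one norm_power power_eq_1_iff zero_less_iff_neq_zero)
  have pc: "pchar H (\<lambda>_. 1)" using sg unfolding pchar_def by simp
  have zc: "\<forall>m. zmult m g \<in> H \<longrightarrow> z powi m = 1"
  proof (intro allI impI)
    fix m assume "zmult m g \<in> H"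
    then obtain q where q: "m = int N * q" using L(3) by (auto elim: dvdE)
    then show "z powi m = 1" using z(1) by (simp add: power_int_mult)
  qed
  obtain \<psi> where \<psi>: "pchar {h + zmult k g |h k. h \<in> H} \<psi>" "\<forall>x\<in>H. \<psi> x = 1" "\<psi> g = z"
    using one_step[OF pc zn] zc by auto
  obtain \<xi> where \<xi>: "character \<xi>" "\<forall>x\<in>{h + zmult k g |h k. h \<in> H}. \<xi> x = \<psi> x"
    using extend_char[OF \<psi>(1)] by blast
  have d0: "0 \<in> H" using sg unfolding subgrp_def by simp
  have gin: "g \<in> {h + zmult k g |h k. h \<in> H}" by (intro CollectI exI[of _ 0] exI[of _ 1] conjI) (simp_all add: d0)
  have sub: "H \<subseteq> {h + zmult k g |h k. h \<in> H}"
  proof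
    fix x assume "x \<in> H"
    then show "x \<in> {h + zmult k g |h k. h \<in> H}" by (intro CollectI exI[of _ x] exI[of _ 0] conjI) simp_all
  qed
  have "\<forall>h\<in>H. \<xi> h = 1"
  proof
    fix h assume h: "h \<in> H"
    show "\<xi> h = 1" using bspec[OF \<xi>(2) subsetD[OF sub h]] bspec[OF \<psi>(2) h] by simp
  qed
  moreover have "\<xi> g \<noteq> 1" using \<xi>(2) \<psi>(3) gin z(2) by simp
  ultimately show ?thesis using \<xi>(1) by blast
qed

lemma coset_self: "subgrp H \<Longrightarrow> g \<in> H \<Longrightarrow> (\<lambda>h. g + h) ` H = H"
  unfolding subgrp_def
  by (auto, metis add_diff_cancel_left' diff_conv_add_uminus image_eqI add.commute) 

lemma fi_power:
  assumes sg: "subgrp H" and fin: "finite ((\<lambda>g. (\<lambda>h. g + h) ` H) ` UNIV)"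
  shows "\<exists>N::nat. N > 0 \<and> zmult (int N) g \<in> H"
proof -
  let ?f = "\<lambda>j::nat. (\<lambda>h. zmult (int j) g + h) ` H"
  have "range ?f \<subseteq> (\<lambda>g. (\<lambda>h. g + h) ` H) ` UNIV" by auto
  then have "finite (range ?f)" using fin finite_subset by blast
  then have "\<not> inj ?f" using finite_imageD by blast
  then obtain i j where ij: "i \<noteq> j" "?f i = ?f j" unfolding inj_def by blast
  have "zmult (int i) g \<in> ?f j" using ij(2) sg unfolding subgrp_def by (metis add.right_neutral image_eqI)
  then obtain h where h: "h \<in> H" "zmult (int i) g = zmult (int j) g + h" by auto
  then have d: "zmult (int i - int j) g \<in> H" by (simp add: zmult_diff_left)
  show ?thesis
  proof (cases "i > j")
    case True
    then show ?thesis using d by (intro exI[of _ "i - j"]) (simp add: of_nat_diff)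
  next
    case False
    then have "j > i" using ij by simp
    moreover have "zmult (int j - int i) g \<in> H" using d sg unfolding subgrp_def
      by (metis minus_diff_eq zmult_neg_left)
    ultimately show ?thesis by (intro exI[of _ "j - i"]) (simp add: of_nat_diff)
  qed
qed

lemma fi_bohr:
  fixes H :: "'a::ab_group_add set"
  assumes sg: "subgrp H" and fin: "finite ((\<lambda>g. (\<lambda>h. g + h) ` H) ` UNIV)"
  shows "\<exists>B'. bohr_nbhd B' \<and> B' \<subseteq> H"
proof -
  let ?C = "(\<lambda>g. (\<lambda>h. g + h) ` H) ` UNIV - {H}"
  have fC: "finite ?C" using fin by simp
  obtain e where e: "bij_betw e {0..<card ?C} ?C" using ex_bij_betw_nat_finite[OF fC] by blast
  define n where "n = card ?C"
  define gs where "gs j = (SOME g. (\<lambda>h. g + h) ` H = e j)" for j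
  have gs: "(\<lambda>h. gs j + h) ` H = e j" "gs j \<notin> H" if "j < n" for j
  proof -
    have "e j \<in> ?C" using bij_betw_apply[OF e] that unfolding n_def by simp
    then obtain g0 where "(\<lambda>h. g0 + h) ` H = e j" by blast
    then show gj: "(\<lambda>h. gs j + h) ` H = e j" unfolding gs_def by (rule someI)
    show "gs j \<notin> H" using gj coset_self[OF sg] \<open>e j \<in> ?C\<close> by auto
  qed
  define xi where "xi j = (SOME \<xi>. character \<xi> \<and> (\<forall>h\<in>H. \<xi> h = 1) \<and> \<xi> (gs j) \<noteq> 1)" for j
  have xi: "character (xi j) \<and> (\<forall>h\<in>H. xi j h = 1) \<and> xi j (gs j) \<noteq> 1" if "j < n" for j
  proof -
    have ex: "\<exists>\<xi>. character \<xi> \<and> (\<forall>h\<in>H. \<xi> h = 1) \<and> \<xi> (gs j) \<noteq> 1"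
      by (rule sep_char[OF sg fi_power[OF sg fin] gs(2)[OF that]])
    show ?thesis unfolding xi_def by (rule someI_ex[OF ex])
  qed
  define \<delta> where "\<delta> = Min (insert 1 ((\<lambda>j. norm (xi j (gs j) - 1)) ` {..<n}))"
  have \<delta>pos: "\<delta> > 0" unfolding \<delta>_def using xi by (subst Min_gr_iff) auto
  have \<delta>le: "\<delta> \<le> norm (xi j (gs j) - 1)" if "j < n" for j unfolding \<delta>_def using that by (intro Min_le) auto
  define B' where "B' = {x. \<forall>j<n. norm (xi j x - 1) < \<delta>}"
  have "bohr_nbhd B'" unfolding bohr_nbhd_def B'_def using \<delta>pos xi by blast
  moreover have "B' \<subseteq> H"
  proof
    fix x assume x: "x \<in> B'"
    show "x \<in> H"
    proof (rule ccontr)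
      assume nx: "x \<notin> H"
      have "(\<lambda>h. x + h) ` H \<noteq> H" using nx sg unfolding subgrp_def by (metis add.right_neutral imageI)
      then have "(\<lambda>h. x + h) ` H \<in> ?C" by auto
      then have "(\<lambda>h. x + h) ` H \<in> e ` {0..<card ?C}" using bij_betw_imp_surj_on[OF e] by simp
      then obtain j where j0: "(\<lambda>h. x + h) ` H = e j" "j \<in> {0..<card ?C}" by (rule imageE)
      then have j: "j < n" "e j = (\<lambda>h. x + h) ` H" unfolding n_def by simp_all
      have "x \<in> (\<lambda>h. gs j + h) ` H" using gs(1)[OF j(1)] j(2) sg unfolding subgrp_def
        by (metis add.right_neutral image_eqI)
      then obtain h where h: "h \<in> H" "x = gs j + h" by auto
      have "xi j x = xi j (gs j)" using xi[OF j(1)] h by (simp add: character_add)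
      then show False using x j(1) \<delta>le[OF j(1)] unfolding B'_def by fastforce
    qed
  qed
  ultimately show ?thesis by blast
qed



definition tp :: "('a \<Rightarrow> complex) set \<Rightarrow> ('a \<Rightarrow> complex) \<Rightarrow> bool" where
  "tp \<Gamma> f \<longleftrightarrow> (\<exists>L. (\<forall>p\<in>set L. snd p \<in> \<Gamma>) \<and> (\<forall>h. f h = sum_list (map (\<lambda>p. fst p * snd p h) L)))"

lemma tp_char: "\<theta> \<in> \<Gamma> \<Longrightarrow> tp \<Gamma> (\<lambda>h. a * \<theta> h)"
  unfolding tp_def by (intro exI[of _ "[(a,\<theta>)]"]) auto

lemma tp_cong: "tp \<Gamma> f \<Longrightarrow> (\<And>h. f h = g h) \<Longrightarrow> tp \<Gamma> g"
  unfolding tp_def by simp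

lemma tp_zero: "tp \<Gamma> (\<lambda>h. 0)"
  unfolding tp_def by (intro exI[of _ "[]"]) auto

lemma tp_add: "tp \<Gamma> f \<Longrightarrow> tp \<Gamma> g \<Longrightarrow> tp \<Gamma> (\<lambda>h. f h + g h)"
  unfolding tp_def
proof (elim exE conjE)
  fix L M assume "\<forall>p\<in>set L. snd p \<in> \<Gamma>" "\<forall>h. f h = sum_list (map (\<lambda>p. fst p * snd p h) L)"
    "\<forall>p\<in>set M. snd p \<in> \<Gamma>" "\<forall>h. g h = sum_list (map (\<lambda>p. fst p * snd p h) M)"
  then show "\<exists>L. (\<forall>p\<in>set L. snd p \<in> \<Gamma>) \<and> (\<forall>h. f h + g h = sum_list (map (\<lambda>p. fst p * snd p h) L))"
    by (intro exI[of _ "L @ M"]) auto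
qed

lemma sum_list_prod_aux:
  fixes L M :: "(complex \<times> ('a \<Rightarrow> complex)) list"
  shows "sum_list (map (\<lambda>p. fst p * snd p h) L) * sum_list (map (\<lambda>p. fst p * snd p h) M)
   = sum_list (map (\<lambda>p. fst p * snd p h)
       (concat (map (\<lambda>p. map (\<lambda>q. (fst p * fst q, \<lambda>x. snd p x * snd q x)) M) L)))"
proof (induction L)
  case Nil then show ?case by simp
next
  case (Cons p L)
  have "fst p * snd p h * sum_list (map (\<lambda>p. fst p * snd p h) M)
      = sum_list (map (\<lambda>q. fst p * fst q * (snd p h * snd q h)) M)"
    by (induction M) (auto simp: algebra_simps)
  then show ?case using Cons by (simp add: distrib_right o_def)
qed

lemma tp_mult:
  assumes cl: "\<And>\<theta> \<eta>. \<theta> \<in> \<Gamma> \<Longrightarrow> \<eta> \<in> \<Gamma> \<Longrightarrow> (\<lambda>x. \<theta> x * \<eta> x) \<in> \<Gamma>"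
  shows "tp \<Gamma> f \<Longrightarrow> tp \<Gamma> g \<Longrightarrow> tp \<Gamma> (\<lambda>h. f h * g h)"
  unfolding tp_def
proof (elim exE conjE)
  fix L M assume a: "\<forall>p\<in>set L. snd p \<in> \<Gamma>" "\<forall>h. f h = sum_list (map (\<lambda>p. fst p * snd p h) L)"
    "\<forall>p\<in>set M. snd p \<in> \<Gamma>" "\<forall>h. g h = sum_list (map (\<lambda>p. fst p * snd p h) M)"
  let ?N = "concat (map (\<lambda>p. map (\<lambda>q. (fst p * fst q, \<lambda>x. snd p x * snd q x)) M) L)"
  have "\<forall>p\<in>set ?N. snd p \<in> \<Gamma>" using a(1,3) cl by auto
  moreover have "\<forall>h. f h * g h = sum_list (map (\<lambda>p. fst p * snd p h) ?N)"
  proof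
    fix h
    have "f h * g h = sum_list (map (\<lambda>p. fst p * snd p h) L) * sum_list (map (\<lambda>p. fst p * snd p h) M)"
      using a(2,4) by simp
    also have "\<dots> = sum_list (map (\<lambda>p. fst p * snd p h) ?N)" by (rule sum_list_prod_aux)
    finally show "f h * g h = sum_list (map (\<lambda>p. fst p * snd p h) ?N)" .
  qed
  ultimately show "\<exists>L. (\<forall>p\<in>set L. snd p \<in> \<Gamma>) \<and> (\<forall>h. f h * g h = sum_list (map (\<lambda>p. fst p * snd p h) L))"
    by blast
qed

lemma tp_sum:
  assumes "finite I" "\<And>i. i \<in> I \<Longrightarrow> tp \<Gamma> (f i)"
  shows "tp \<Gamma> (\<lambda>h. \<Sum>i\<in>I. f i h)"
  using assms by (induction I rule: finite_induct) (auto intro: tp_zero tp_add)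

lemma tp_prod:
  assumes cl: "\<And>\<theta> \<eta>. \<theta> \<in> \<Gamma> \<Longrightarrow> \<eta> \<in> \<Gamma> \<Longrightarrow> (\<lambda>x. \<theta> x * \<eta> x) \<in> \<Gamma>"
    and one: "(\<lambda>_. 1) \<in> \<Gamma>"
  assumes "finite I" "\<And>i. i \<in> I \<Longrightarrow> tp \<Gamma> (f i)"
  shows "tp \<Gamma> (\<lambda>h. \<Prod>i\<in>I. f i h)"
  using assms(3,4)
proof (induction I rule: finite_induct)
  case empty
  then show ?case using tp_char[OF one, of 1] by simp
next
  case (insert x F)
  have "tp \<Gamma> (\<lambda>h. f x h * (\<Prod>i\<in>F. f i h))"
    by (rule tp_mult[OF cl]) (use insert in auto)
  then show ?case by (rule tp_cong) (use insert in simp)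
qed

lemma sum_list_sum_swap:
  "(\<Sum>k\<in>R. sum_list (map (F k) L)) = sum_list (map (\<lambda>p. \<Sum>k\<in>R. F k p) L)"
  by (induction L) (auto simp: sum.distrib)

lemma sum_list_filter_aux:
  fixes c :: complex
  shows "sum_list (map (\<lambda>p. if C p then c * f p else 0) L) = c * sum_list (map f (filter C L))"
  by (induction L) (auto simp: algebra_simps)

lemma sum_list_shift:
  fixes L :: "(complex \<times> 'c) list"
  shows "sum_list (map (\<lambda>p. fst p * x p) L) = sum_list (map (\<lambda>p. fst p * (x p - 1)) L) + sum_list (map fst L)"
  by (induction L) (auto simp: algebra_simps)

lemma sum_list_bound:
  fixes \<Psi> :: "complex \<times> 'c \<Rightarrow> complex" and xs :: "(complex \<times> 'c) list"
  assumes "\<forall>p\<in>set xs. norm (\<Psi> p - 1) < \<delta>"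
  shows "norm (sum_list (map (\<lambda>p. fst p * (\<Psi> p - 1)) xs)) \<le> \<delta> * sum_list (map (\<lambda>p. norm (fst p)) xs)"
  using assms
proof (induction xs)
  case Nil then show ?case by simp
next
  case (Cons p xs)
  have "norm (\<Psi> p - 1) \<le> \<delta>" using Cons.prems by simp
  then have "norm (fst p) * norm (\<Psi> p - 1) \<le> norm (fst p) * \<delta>" by (rule mult_left_mono) simp
  then have "norm (fst p * (\<Psi> p - 1)) \<le> \<delta> * norm (fst p)"
    by (simp add: norm_mult mult.commute)
  then show ?case using Cons norm_triangle_ineq[of "fst p * (\<Psi> p - 1)"]
    by (simp add: distrib_left) (smt (verit) norm_triangle_ineq)
qed



lemma subgrp_range: "subgrp (range (zmult c))"
  unfolding subgrp_def
  by (auto simp: zmult_add_right[symmetric] zmult_neg_right[symmetric]) (metis zmult_zero_right rangeI)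

lemma divide_char:
  assumes ch: "character \<theta>" and tr: "\<forall>k. zmult c k = 0 \<longrightarrow> \<theta> k = 1"
  shows "\<exists>\<psi>. character \<psi> \<and> (\<forall>h. \<psi> (zmult c h) = \<theta> h)"
proof -
  have wd: "\<theta> h = \<theta> h'" if "zmult c h = zmult c h'" for h h'
  proof -
    have "zmult c (h - h') = 0" using that by (simp add: zmult_diff_right)
    then have "\<theta> (h - h') = 1" using tr by blast
    moreover have "\<theta> h = \<theta> (h - h') * \<theta> h'" using character_add[OF ch, of "h - h'" h'] by simp
    ultimately show ?thesis by simp
  qed
  define \<phi> where "\<phi> x = \<theta> (SOME h. x = zmult c h)" for x
  have phi: "\<phi> (zmult c h) = \<theta> h" for h
    unfolding \<phi>_def by (rule wd[symmetric], rule someI[of "\<lambda>h'. zmult c h = zmult c h'" h], rule refl)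
  have "pchar (range (zmult c)) \<phi>"
    unfolding pchar_def using subgrp_range
    by (auto simp: phi zmult_add_right[symmetric] character_add[OF ch] character_norm[OF ch])
  from extend_char[OF this] obtain \<psi> where "character \<psi>" "\<forall>x\<in>range (zmult c). \<psi> x = \<phi> x" by blast
  then show ?thesis using phi by auto
qed

lemma norm1_cnj: "norm (z::complex) = 1 \<Longrightarrow> z * cnj z = 1"
  by (metis complex_norm_square of_real_1 one_power2)

lemma main4:
  fixes \<chi>s :: "nat \<Rightarrow> 'a::ab_group_add \<Rightarrow> complex"
  assumes chs: "\<forall>i<r. character (\<chi>s i)" and eps: "\<epsilon> > 0" and c: "c \<noteq> 0"
  shows "\<exists>B'. bohr_nbhd B' \<and> (\<forall>g\<in>B'. \<forall>h. g = zmult c h \<longrightarrow>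
            (\<exists>b. (\<forall>i<r. norm (\<chi>s i b - 1) < \<epsilon>) \<and> zmult c b = g))"
proof -
  define K where "K = {k::'a. zmult c k = 0}"
  define \<Gamma> where "\<Gamma> = {\<theta>. character \<theta> \<and> (\<forall>x. (\<forall>i<r. \<chi>s i x = 1) \<longrightarrow> \<theta> x = 1)}"
  define Xv where "Xv k = map (\<lambda>i. \<chi>s i k) [0..<r]" for k
  have Xv_eq: "Xv x = Xv y \<longleftrightarrow> (\<forall>i<r. \<chi>s i x = \<chi>s i y)" for x y unfolding Xv_def by auto
  have Xv_add: "Xv (h + a) = Xv (h + b)" if "Xv a = Xv b" for h a b
    using that chs unfolding Xv_eq by (simp add: character_add)
  have Xv_cancel: "Xv a = Xv b" if "Xv (h + a) = Xv (h + b)" for h a b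
    using that chs character_nz unfolding Xv_eq by (auto simp: character_add)
  have Gam_same: "\<theta> x = \<theta> y" if "\<theta> \<in> \<Gamma>" "Xv x = Xv y" for \<theta> x y
  proof -
    have "\<chi>s i (x - y) = 1" if "i < r" for i
      using \<open>Xv x = Xv y\<close> chs that unfolding Xv_eq
      by (simp add: character_diff norm1_cnj character_norm)
    then have "\<theta> (x - y) = 1" using \<open>\<theta> \<in> \<Gamma>\<close> unfolding \<Gamma>_def by blast
    moreover have "\<theta> x = \<theta> (x - y) * \<theta> y" using \<open>\<theta> \<in> \<Gamma>\<close> character_add[of \<theta> "x - y" y] unfolding \<Gamma>_def by simp
    ultimately show ?thesis by simp
  qed
  have K_add: "a + b \<in> K" if "a \<in> K" "b \<in> K" for a b using that unfolding K_def by (simp add: zmult_add_right)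
  have K0: "0 \<in> K" unfolding K_def by simp
  define n where "n = nat \<bar>c\<bar>"
  have n0: "n \<ge> 1" using c unfolding n_def by simp
  have root: "\<chi>s i k ^ n = 1" if "i < r" "k \<in> K" for i k
  proof -
    have ch: "character (\<chi>s i)" using chs that(1) by simp
    have "\<chi>s i k powi c = \<chi>s i (zmult c k)" using character_zmult[OF ch] by simp
    also have "\<dots> = 1" using that(2) character_zero[OF ch] unfolding K_def by simp
    finally have "\<chi>s i k powi c = 1" .
    then show ?thesis unfolding n_def
      by (cases "c \<ge> 0") (auto simp: power_int_def power_inverse split: if_splits)
  qed
  have "Xv ` K \<subseteq> {xs. set xs \<subseteq> {z. z ^ n = 1} \<and> length xs = r}" using root unfolding Xv_def by auto
  then have finXK: "finite (Xv ` K)"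
    using finite_lists_length_eq[OF finite_roots_unity[OF n0]] finite_subset by blast
  define R where "R = (\<lambda>w. SOME k. k \<in> K \<and> Xv k = w) ` (Xv ` K)"
  have Rrep: "(SOME k. k \<in> K \<and> Xv k = w) \<in> K \<and> Xv (SOME k. k \<in> K \<and> Xv k = w) = w" if wK: "w \<in> Xv ` K" for w
  proof -
    obtain k0 where k0: "k0 \<in> K" "Xv k0 = w" using wK by blast
    show ?thesis using someI[of "\<lambda>k. k \<in> K \<and> Xv k = w" k0] k0 by simp
  qed
  have finR: "finite R" unfolding R_def using finXK by simp
  have RK: "R \<subseteq> K" unfolding R_def using Rrep by auto
  define rp where "rp w = (SOME k. k \<in> K \<and> Xv k = w)" for w
  have Rdef: "R = rp ` (Xv ` K)" unfolding R_def rp_def by simp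
  have Rrp: "rp w \<in> K" "Xv (rp w) = w" if "w \<in> Xv ` K" for w using Rrep[OF that] unfolding rp_def by simp_all
  have "Xv ` R = (\<lambda>w. Xv (rp w)) ` (Xv ` K)" unfolding Rdef by (simp add: image_image)
  also have "\<dots> = (\<lambda>w. w) ` (Xv ` K)" by (rule image_cong) (simp_all add: Rrp)
  finally have XR: "Xv ` R = Xv ` K" by simp
  have injR: "inj_on Xv R"
  proof (rule inj_onI)
    fix x y assume "x \<in> R" "y \<in> R" "Xv x = Xv y"
    then obtain w1 w2 where "w1 \<in> Xv ` K" "x = rp w1" "w2 \<in> Xv ` K" "y = rp w2" unfolding Rdef by blast
    then show "x = y" using \<open>Xv x = Xv y\<close> Rrp by metis
  qed
  have Rne: "R \<noteq> {}"
  proof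
    assume "R = {}"
    then have "Xv ` K = {}" using XR by simp
    then show False using K0 by simp
  qed
  have reindex: "\<exists>\<sigma>. bij_betw \<sigma> R R \<and> (\<forall>k\<in>R. Xv (\<sigma> k) = Xv (k0 + k))" if k0: "k0 \<in> K" for k0
  proof -
    define \<sigma> where "\<sigma> k = (SOME k'. k' \<in> R \<and> Xv k' = Xv (k0 + k))" for k
    have s: "\<sigma> k \<in> R \<and> Xv (\<sigma> k) = Xv (k0 + k)" if "k \<in> R" for k
    proof -
      have "k0 + k \<in> K" using K_add[OF k0 subsetD[OF RK that]] .
      then have "Xv (k0 + k) \<in> Xv ` K" by (rule imageI)
      then have "Xv (k0 + k) \<in> Xv ` R" unfolding XR .
      then obtain k' where k'0: "Xv (k0 + k) = Xv k'" "k' \<in> R" by (rule imageE)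
      then have k': "k' \<in> R" "Xv k' = Xv (k0 + k)" by simp_all
      show ?thesis unfolding \<sigma>_def using someI[of "\<lambda>k'. k' \<in> R \<and> Xv k' = Xv (k0 + k)" k'] k' by simp
    qed
    have inj: "inj_on \<sigma> R"
    proof (rule inj_onI)
      fix a b assume ab: "a \<in> R" "b \<in> R" "\<sigma> a = \<sigma> b"
      then have "Xv (k0 + a) = Xv (k0 + b)" using s[OF ab(1)] s[OF ab(2)] by simp
      then have "Xv a = Xv b" by (rule Xv_cancel)
      then show "a = b" using inj_onD[OF injR _ ab(1) ab(2)] by blast
    qed
    have "\<sigma> ` R = R" using endo_inj_surj[OF finR _ inj] s by auto
    then have "bij_betw \<sigma> R R" using inj unfolding bij_betw_def by simp
    then show ?thesis using s by blast
  qed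
  have orth: "(\<Sum>k\<in>R. \<theta> k) = (if \<forall>k\<in>K. \<theta> k = 1 then of_nat (card R) else 0)" if th: "\<theta> \<in> \<Gamma>" for \<theta>
  proof (cases "\<forall>k\<in>K. \<theta> k = 1")
    case True
    then show ?thesis using RK by (simp add: subset_iff)
  next
    case False
    then obtain k0 where k0: "k0 \<in> K" "\<theta> k0 \<noteq> 1" by blast
    obtain \<sigma> where \<sigma>: "bij_betw \<sigma> R R" "\<forall>k\<in>R. Xv (\<sigma> k) = Xv (k0 + k)" using reindex[OF k0(1)] by blast
    have ch: "character \<theta>" using th unfolding \<Gamma>_def by simp
    have "(\<Sum>k\<in>R. \<theta> k) = (\<Sum>k\<in>R. \<theta> (\<sigma> k))" using sum.reindex_bij_betw[OF \<sigma>(1), of \<theta>] by simp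
    also have "\<dots> = (\<Sum>k\<in>R. \<theta> k0 * \<theta> k)"
    proof (rule sum.cong[OF refl])
      fix k assume kR: "k \<in> R"
      have "\<theta> (\<sigma> k) = \<theta> (k0 + k)" by (rule Gam_same[OF th]) (use \<sigma>(2) kR in blast)
      then show "\<theta> (\<sigma> k) = \<theta> k0 * \<theta> k" by (simp add: character_add[OF ch])
    qed
    also have "\<dots> = \<theta> k0 * (\<Sum>k\<in>R. \<theta> k)" by (simp add: sum_distrib_left)
    finally have "(\<theta> k0 - 1) * (\<Sum>k\<in>R. \<theta> k) = 0" by (simp add: algebra_simps)
    then have "(\<Sum>k\<in>R. \<theta> k) = 0" using k0(2) by simp
    then show ?thesis using False by (simp only: if_False)
  qed
  define D where "D x = (\<Sum>i<r. (2 - \<chi>s i x - cnj (\<chi>s i x)))" for x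
  define d where "d x = (\<Sum>i<r. (norm (\<chi>s i x - 1))\<^sup>2)" for x
  have Dd: "D x = of_real (d x)" for x
  proof -
    have "2 - \<chi>s i x - cnj (\<chi>s i x) = of_real ((norm (\<chi>s i x - 1))\<^sup>2)" if "i < r" for i
    proof -
      have n1: "\<chi>s i x * cnj (\<chi>s i x) = 1" using chs that norm1_cnj character_norm by blast
      have "of_real ((norm (\<chi>s i x - 1))\<^sup>2) = (\<chi>s i x - 1) * cnj (\<chi>s i x - 1)" by (rule complex_norm_square)
      also have "\<dots> = 2 - \<chi>s i x - cnj (\<chi>s i x)" using n1 by (simp add: algebra_simps)
      finally show ?thesis by simp
    qed
    then show ?thesis unfolding D_def d_def by simp
  qed
  have D_same: "D x = D y" if "Xv x = Xv y" for x y using that unfolding D_def Xv_eq by simp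
  define P where "P h = (\<Prod>k\<in>R. D (h + k))" for h
  have P_inv: "P (h + k0) = P h" if k0: "k0 \<in> K" for h k0
  proof -
    obtain \<sigma> where \<sigma>: "bij_betw \<sigma> R R" "\<forall>k\<in>R. Xv (\<sigma> k) = Xv (k0 + k)" using reindex[OF k0] by blast
    have "P h = (\<Prod>k\<in>R. D (h + \<sigma> k))" unfolding P_def using prod.reindex_bij_betw[OF \<sigma>(1), of "\<lambda>k. D (h + k)"] by simp
    also have "\<dots> = P (h + k0)" unfolding P_def
    proof (rule prod.cong[OF refl])
      fix k assume kR: "k \<in> R"
      have "Xv (\<sigma> k) = Xv (k0 + k)" using \<sigma>(2) kR by blast
      then have xe: "Xv (h + \<sigma> k) = Xv (h + (k0 + k))" by (rule Xv_add)
      show "D (h + \<sigma> k) = D (h + k0 + k)" using D_same[OF xe] by (simp add: add.assoc)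
    qed
    finally show ?thesis by simp
  qed
  have cl: "(\<lambda>x. \<theta> x * \<eta> x) \<in> \<Gamma>" if "\<theta> \<in> \<Gamma>" "\<eta> \<in> \<Gamma>" for \<theta> \<eta>
    using that unfolding \<Gamma>_def character_def by (auto simp: norm_mult mult_ac)
  have one: "(\<lambda>_. 1) \<in> \<Gamma>" unfolding \<Gamma>_def character_def by simp
  have chiG: "\<chi>s i \<in> \<Gamma>" if "i < r" for i using chs that unfolding \<Gamma>_def by auto
  have cchiG: "(\<lambda>x. cnj (\<chi>s i x)) \<in> \<Gamma>" if "i < r" for i using chs that unfolding \<Gamma>_def character_def by auto
  have tpD: "tp \<Gamma> (\<lambda>h. D (h + k))" for k
  proof -
    have "tp \<Gamma> (\<lambda>h. \<Sum>i<r. (2 * 1 + ((- \<chi>s i k) * \<chi>s i h + (- cnj (\<chi>s i k)) * cnj (\<chi>s i h))))"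
      by (intro tp_sum tp_add tp_char one chiG cchiG) auto
    then show ?thesis
    proof (rule tp_cong)
      fix h
      show "(\<Sum>i<r. (2 * 1 + ((- \<chi>s i k) * \<chi>s i h + (- cnj (\<chi>s i k)) * cnj (\<chi>s i h)))) = D (h + k)"
        unfolding D_def
      proof (rule sum.cong[OF refl])
        fix i assume "i \<in> {..<r}"
        then have ch: "character (\<chi>s i)" using chs by simp
        show "2 * 1 + ((- \<chi>s i k) * \<chi>s i h + (- cnj (\<chi>s i k)) * cnj (\<chi>s i h))
              = 2 - \<chi>s i (h + k) - cnj (\<chi>s i (h + k))"
          by (simp add: character_add[OF ch] algebra_simps)
      qed
    qed
  qed
  have "tp \<Gamma> P" unfolding P_def by (intro tp_prod cl one finR tpD)
  then obtain L where L: "\<forall>p\<in>set L. snd p \<in> \<Gamma>" "\<And>h. P h = sum_list (map (\<lambda>p. fst p * snd p h) L)"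
    unfolding tp_def by blast
  define LK where "LK = filter (\<lambda>p. \<forall>k\<in>K. snd p k = 1) L"
  have PK: "P h = sum_list (map (\<lambda>p. fst p * snd p h) LK)" for h
  proof -
    have "(\<Sum>k\<in>R. P (h + k)) = (\<Sum>k\<in>R. P h)"
    proof (rule sum.cong[OF refl])
      fix k assume "k \<in> R"
      show "P (h + k) = P h" by (rule P_inv) (rule subsetD[OF RK \<open>k \<in> R\<close>])
    qed
    then have "of_nat (card R) * P h = (\<Sum>k\<in>R. P (h + k))" by simp
    also have "\<dots> = (\<Sum>k\<in>R. sum_list (map (\<lambda>p. fst p * snd p (h + k)) L))" using L(2) by simp
    also have "\<dots> = sum_list (map (\<lambda>p. \<Sum>k\<in>R. fst p * snd p (h + k)) L)" by (rule sum_list_sum_swap)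
    also have "\<dots> = sum_list (map (\<lambda>p. fst p * snd p h * (\<Sum>k\<in>R. snd p k)) L)"
    proof (intro arg_cong[where f=sum_list] map_cong refl)
      fix p assume "p \<in> set L"
      then have "character (snd p)" using L(1) unfolding \<Gamma>_def by auto
      then show "(\<Sum>k\<in>R. fst p * snd p (h + k)) = fst p * snd p h * (\<Sum>k\<in>R. snd p k)"
        by (simp add: character_add sum_distrib_left mult.assoc)
    qed
    also have "\<dots> = sum_list (map (\<lambda>p. if \<forall>k\<in>K. snd p k = 1 then of_nat (card R) * (fst p * snd p h) else 0) L)"
    proof (intro arg_cong[where f=sum_list] map_cong refl)
      fix p assume "p \<in> set L"
      then have "snd p \<in> \<Gamma>" using L(1) by blast
      then show "fst p * snd p h * (\<Sum>k\<in>R. snd p k) = (if \<forall>k\<in>K. snd p k = 1 then of_nat (card R) * (fst p * snd p h) else 0)"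
        by (simp add: orth)
    qed
    also have "\<dots> = of_nat (card R) * sum_list (map (\<lambda>p. fst p * snd p h) LK)"
      unfolding LK_def by (rule sum_list_filter_aux)
    finally show ?thesis using Rne finR by simp
  qed
  have P0: "P 0 = 0"
  proof -
    have "Xv 0 \<in> Xv ` K" using K0 by (rule imageI)
    then have "Xv 0 \<in> Xv ` R" unfolding XR .
    then obtain k where k0: "Xv 0 = Xv k" "k \<in> R" by (rule imageE)
    then have k: "k \<in> R" "Xv k = Xv 0" by simp_all
    have "D k = D 0" using D_same[OF k(2)] .
    also have "D 0 = 0" unfolding D_def using chs by (simp add: character_zero)
    finally have "D (0 + k) = 0" by simp
    then show ?thesis unfolding P_def using finR k(1) by (simp add: prod_zero_iff) blast
  qed
  have LKG: "character (snd p) \<and> (\<forall>k. zmult c k = 0 \<longrightarrow> snd p k = 1)" if "p \<in> set LK" for p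
    using that L(1) unfolding LK_def \<Gamma>_def K_def by auto
  have sumfst: "sum_list (map fst LK) = 0"
  proof -
    have "sum_list (map (\<lambda>p. fst p * snd p 0) LK) = sum_list (map fst LK)"
      by (intro arg_cong[where f=sum_list] map_cong refl) (use LKG character_zero in auto)
    then show ?thesis using PK[of 0] P0 by simp
  qed
  define \<Psi> where "\<Psi> (p :: complex \<times> ('a \<Rightarrow> complex)) = (SOME \<psi> :: 'a \<Rightarrow> complex. character \<psi> \<and> (\<forall>h. \<psi> (zmult c h) = snd p h))" for p
  have Psi: "character (\<Psi> p) \<and> (\<forall>h. \<Psi> p (zmult c h) = snd p h)" if "p \<in> set LK" for p
  proof -
    have ex: "\<exists>\<psi>. character \<psi> \<and> (\<forall>h. \<psi> (zmult c h) = snd p h)"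
      by (rule divide_char) (use LKG[OF that] in auto)
    show ?thesis unfolding \<Psi>_def by (rule someI_ex[OF ex])
  qed
  define A where "A = sum_list (map (\<lambda>p. norm (fst p)) LK)"
  have A0: "A \<ge> 0" unfolding A_def by (rule sum_list_nonneg) auto
  define \<eta> where "\<eta> = (\<epsilon>\<^sup>2) ^ card R"
  have \<eta>0: "\<eta> > 0" unfolding \<eta>_def using eps by simp
  define \<delta> where "\<delta> = \<eta> / (A + 1)"
  have \<delta>0: "\<delta> > 0" unfolding \<delta>_def using \<eta>0 A0 by simp
  have \<delta>A: "\<delta> * A < \<eta>" unfolding \<delta>_def using \<eta>0 A0 by (simp add: field_simps)
  define B' where "B' = {g. \<forall>j<length LK. norm (\<Psi> (LK ! j) g - 1) < \<delta>}"
  have "bohr_nbhd B'" unfolding bohr_nbhd_def B'_def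
  proof (intro exI[of _ "length LK"] exI[of _ "\<lambda>j. \<Psi> (LK ! j)"] exI[of _ \<delta>] conjI allI impI refl)
    show "\<delta> > 0" by (rule \<delta>0)
    fix i assume "i < length LK"
    then show "character (\<Psi> (LK ! i))" using Psi nth_mem by blast
  qed
  moreover have "\<exists>b. (\<forall>i<r. norm (\<chi>s i b - 1) < \<epsilon>) \<and> zmult c b = g" if g: "g \<in> B'" "g = zmult c h" for g h
  proof -
    have all: "\<forall>p\<in>set LK. norm (\<Psi> p g - 1) < \<delta>"
    proof
      fix p assume "p \<in> set LK"
      then obtain j where j: "j < length LK" "p = LK ! j" by (metis in_set_conv_nth)
      then show "norm (\<Psi> p g - 1) < \<delta>" using g(1) unfolding B'_def by simp
    qed
    have "P h = sum_list (map (\<lambda>p. fst p * \<Psi> p g) LK)"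
      unfolding PK
    proof (intro arg_cong[where f=sum_list] map_cong refl)
      fix p assume "p \<in> set LK"
      show "fst p * snd p h = fst p * \<Psi> p g" using Psi[OF \<open>p \<in> set LK\<close>] g(2) by simp
    qed
    also have "\<dots> = sum_list (map (\<lambda>p. fst p * (\<Psi> p g - 1)) LK) + sum_list (map fst LK)"
      by (rule sum_list_shift)
    finally have "P h = sum_list (map (\<lambda>p. fst p * (\<Psi> p g - 1)) LK)" using sumfst by simp
    then have "norm (P h) \<le> \<delta> * A" unfolding A_def using sum_list_bound[OF all] by simp
    then have lt: "norm (P h) < \<eta>" using \<delta>A by simp
    have Pn: "norm (P h) = (\<Prod>k\<in>R. d (h + k))"
    proof -
      have e: "P h = of_real (\<Prod>k\<in>R. d (h + k))" unfolding P_def Dd by simp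
      have nn: "(\<Prod>k\<in>R. d (h + k)) \<ge> 0" unfolding d_def by (intro prod_nonneg sum_nonneg) auto
      show ?thesis unfolding e norm_of_real using nn by (rule abs_of_nonneg)
    qed
    have "\<exists>k\<in>R. d (h + k) < \<epsilon>\<^sup>2"
    proof (rule ccontr)
      assume "\<not> ?thesis"
      then have "(\<Prod>k\<in>R. (\<epsilon>\<^sup>2::real)) \<le> (\<Prod>k\<in>R. d (h + k))"
        by (intro prod_mono) auto
      then show False using lt Pn unfolding \<eta>_def by simp
    qed
    then obtain k where k: "k \<in> R" "d (h + k) < \<epsilon>\<^sup>2" by blast
    have "norm (\<chi>s i (h + k) - 1) < \<epsilon>" if "i < r" for i
    proof -
      have "(norm (\<chi>s i (h + k) - 1))\<^sup>2 \<le> d (h + k)" unfolding d_def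
        using that by (intro member_le_sum) auto
      then have "(norm (\<chi>s i (h + k) - 1))\<^sup>2 < \<epsilon>\<^sup>2" using k(2) by simp
      then show ?thesis using eps by (simp add: power_less_imp_less_base)
    qed
    moreover have "zmult c (h + k) = g" using g(2) k(1) RK unfolding K_def by (auto simp: zmult_add_right)
    ultimately show ?thesis by blast
  qed
  ultimately show ?thesis by blast
qed



lemma bohr_inter:
  assumes "bohr_nbhd B1" "bohr_nbhd B2"
  shows "\<exists>B. bohr_nbhd B \<and> B \<subseteq> B1 \<inter> B2"
proof -
  obtain r1 :: nat and \<chi>1 e1 where "e1 > 0 \<and> (\<forall>i<r1. character (\<chi>1 i)) \<and> B1 = {g. \<forall>i<r1. norm (\<chi>1 i g - 1) < e1}"
    using assms(1) unfolding bohr_nbhd_def by (elim exE) (rule that)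
  then have 1: "e1 > 0" "\<forall>i<r1. character (\<chi>1 i)" "B1 = {g. \<forall>i<r1. norm (\<chi>1 i g - 1) < e1}" by simp_all
  obtain r2 :: nat and \<chi>2 e2 where "e2 > 0 \<and> (\<forall>i<r2. character (\<chi>2 i)) \<and> B2 = {g. \<forall>i<r2. norm (\<chi>2 i g - 1) < e2}"
    using assms(2) unfolding bohr_nbhd_def by (elim exE) (rule that)
  then have 2: "e2 > 0" "\<forall>i<r2. character (\<chi>2 i)" "B2 = {g. \<forall>i<r2. norm (\<chi>2 i g - 1) < e2}" by simp_all
  define \<chi> where "\<chi> i = (if i < r1 then \<chi>1 i else \<chi>2 (i - r1))" for i
  define B where "B = {g. \<forall>i<r1+r2. norm (\<chi> i g - 1) < min e1 e2}"
  have "bohr_nbhd B" unfolding bohr_nbhd_def B_def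
  proof (intro exI[of _ "r1+r2"] exI[of _ \<chi>] exI[of _ "min e1 e2"] conjI allI impI refl)
    show "min e1 e2 > 0" using 1(1) 2(1) by simp
    fix i assume "i < r1 + r2"
    then show "character (\<chi> i)" unfolding \<chi>_def using 1(2) 2(2) by auto
  qed
  moreover have "B \<subseteq> B1"
  proof
    fix g assume g: "g \<in> B"
    have "norm (\<chi>1 i g - 1) < e1" if "i < r1" for i
      using g that unfolding B_def \<chi>_def by (auto dest!: spec[of _ i])
    then show "g \<in> B1" using 1(3) by simp
  qed
  moreover have "B \<subseteq> B2"
  proof
    fix g assume g: "g \<in> B"
    have "norm (\<chi>2 i g - 1) < e2" if "i < r2" for i
      using g that unfolding B_def \<chi>_def by (auto dest!: spec[of _ "r1 + i"])
    then show "g \<in> B2" using 2(3) by simp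
  qed
  ultimately show ?thesis by blast
qed

theorem lemma1p6:
  fixes B :: "'a::{ab_group_add, countable} set" and c :: int
  assumes "bohr_nbhd B"
    and "finite_index (range (zmult c :: 'a \<Rightarrow> 'a))"
  shows "\<exists>B'. bohr_nbhd B' \<and> B' \<subseteq> zmult c ` B"
proof -
  obtain r :: nat and \<chi>s \<epsilon> where "\<epsilon> > 0 \<and> (\<forall>i<r. character (\<chi>s i)) \<and> B = {g. \<forall>i<r. norm (\<chi>s i g - 1) < \<epsilon>}"
    using assms(1) unfolding bohr_nbhd_def by (elim exE) (rule that)
  then have B: "\<epsilon> > 0" "\<forall>i<r. character (\<chi>s i)" "B = {g. \<forall>i<r. norm (\<chi>s i g - 1) < \<epsilon>}" by simp_all
  define H where "H = range (zmult c :: 'a \<Rightarrow> 'a)"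
  have sg: "subgrp H" unfolding H_def by (rule subgrp_range)
  have fin: "finite ((\<lambda>g. (\<lambda>h. g + h) ` H) ` UNIV)" using assms(2) unfolding finite_index_def H_def .
  obtain B2 where B2: "bohr_nbhd B2" "B2 \<subseteq> H" using fi_bohr[OF sg fin] by blast
  have B0: "0 \<in> B" using B by (simp add: character_zero)
  show ?thesis
  proof (cases "c = 0")
    case True
    have "B2 \<subseteq> zmult c ` B"
    proof
      fix x assume "x \<in> B2"
      then have "x = 0" using B2(2) True unfolding H_def by auto
      then show "x \<in> zmult c ` B" using B0 True by (metis image_eqI zmult_zero_left)
    qed
    then show ?thesis using B2(1) by blast
  next
    case False
    obtain B4 where B4: "bohr_nbhd B4" "\<forall>g\<in>B4. \<forall>h. g = zmult c h \<longrightarrow>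
            (\<exists>b. (\<forall>i<r. norm (\<chi>s i b - 1) < \<epsilon>) \<and> zmult c b = g)"
      using main4[OF B(2) B(1) False] by blast
    obtain B' where B': "bohr_nbhd B'" "B' \<subseteq> B2 \<inter> B4" using bohr_inter[OF B2(1) B4(1)] by blast
    have "B' \<subseteq> zmult c ` B"
    proof
      fix x assume x: "x \<in> B'"
      then have "x \<in> H" using B' B2(2) by blast
      then obtain h where h: "x = zmult c h" unfolding H_def by blast
      have "x \<in> B4" using x B' by blast
      then obtain b where b: "\<forall>i<r. norm (\<chi>s i b - 1) < \<epsilon>" "zmult c b = x" using B4(2) h by blast
      have "b \<in> B" using b(1) B(3) by simp
      then show "x \<in> zmult c ` B" using b(2) by blast
    qed
    then show ?thesis using B'(1) by blast
  qed
qed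


end
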